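(* Let $n,M\ge1$ be integers, $\mathcal X=\{x^{(1)},\dots,x^{(L)}\}\subset\mathbb C$ a set of $L$ channel input symbols, $\sigma^2>0$, $g:\mathbb C\to[0,+\infty]$ measurable, $\epsilon>0$, $B,\delta\in\mathbb R$. Let $\mathscr C$ be a homogeneous $(n,M,\epsilon,B,\delta)$-code (as defined in the context) with information rate $R=\frac{\log_2M}{n}$. Then $$R\le H(P_{\mathscr C})+\frac1{n^2}\Big(\frac1{12}-\sum_{\ell=1}^L\frac1{12P_{\mathscr C}(x^{(\ell)})+1}\Big)+\frac1n\Big(\log\sqrt{2\pi}-\sum_{\ell=1}^L\log\sqrt{2\pi P_{\mathscr C}(x^{(\ell)})}\Big)-\frac{\log n}{n}\cdot\frac{L-1}{2}.$$
   Context: Here $\log$ is the base-2 logarithm and $H(P)=-\sum_xP(x)\log_2P(x)$ is the entropy in bits; $\log 0=-\infty$. Channel: outputs $\boldsymbol Y=\boldsymbol x+\boldsymbol N_1$, $\boldsymbol Z=\boldsymbol x+\boldsymbol N_2$, all noise components i.i.d. complex circularly symmetric Gaussian with real and imaginary parts of zero mean and variance $\sigma^2/2$; $f_{Y|X}(y|x)=\frac1{\pi\sigma^2}\exp(-|y-x|^2/\sigma^2)$, $f_{\boldsymbol Y|\boldsymbol X}(\boldsymbol y|\boldsymbol x)=\prod_tf_{Y|X}(y_t|x_t)$ (same for $\boldsymbol Z$). An $(n,M)$-code is $\mathscr C=\{(\boldsymbol u(i),\mathcal D_i)\}_{i=1}^M$ with $\boldsymbol u(i)\in\mathcal X^n$,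 $|u_t(i)|\le P$ for a fixed $P>0$, pairwise disjoint measurable $\mathcal D_i\subseteq\mathbb C^n$, $M\le2^{n\lfloor\log_2L\rfloor}$; decoding sets are of product form $\mathcal D_i=\mathcal D_{i,1}\times\cdots\times\mathcal D_{i,n}$, $\mathcal D_{i,t}\subseteq\mathbb C$ measurable. $\gamma_i(\mathscr C)=1-\int_{\mathcal D_i}f_{\boldsymbol Y|\boldsymbol X}(\boldsymbol y|\boldsymbol u(i))d\boldsymbol y$, $\gamma=\frac1M\sum_i\gamma_i$; $(n,M,\epsilon)$-code: $\gamma<\epsilon$. With $\bar g(\boldsymbol z)=\frac1n\sum_tg(z_t)$, $\theta_i=\Pr[\bar g(\boldsymbol Z)<B\mid\boldsymbol X=\boldsymbol u(i)]$, $\theta=\frac1M\sum_i\theta_i$; $(n,M,\epsilon,B,\delta)$-code: $(n,M,\epsilon)$-code with $\theta<\delta$. Types: $P_{\boldsymbol u(i)}(x^{(\ell)})=\frac1n\#\{t:u_t(i)=x^{(\ell)}\}$, $P_{\mathscr C}=\frac1M\sum_iP_{\boldsymbol u(i)}$. For each $\ell$, $\mathcal E_\ell=\mathcal D_{i^\star,t^\star}$ where $(i^\star,t^\star)$ minimizes $\int_{\mathcal D_{i,t}}f_{Y|X}(y|x^{(\ell)})dy$ over $\{1,\dots,M\}\times\{1,\dots,n\}$. The code is homogeneous if $P_{\boldsymbol u(i)}=P_{\mathscr C}$ for every $i$, and $\mathcal D_{i,t}=\mathcal E_\ell$ whenever $u_t(i)=x^{(\ell)}$. *)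

theory Defs
  imports "HOL-Analysis.Analysis"
begin

definition fYX :: "real \<Rightarrow> complex \<Rightarrow> complex \<Rightarrow> real" where
  "fYX s2 y x = exp (- (cmod (y - x))\<^sup>2 / s2) / (pi * s2)"

definition sprob :: "real \<Rightarrow> complex set \<Rightarrow> complex \<Rightarrow> ennreal" where
  "sprob s2 A x = (\<integral>\<^sup>+ y. indicator A y * ennreal (fYX s2 y x) \<partial>lborel)"

definition vprob :: "real \<Rightarrow> nat \<Rightarrow> (nat \<Rightarrow> complex) \<Rightarrow> (nat \<Rightarrow> complex) set \<Rightarrow> real" where
  "vprob s2 n x A = enn2real (\<integral>\<^sup>+ y. indicator A y * ennreal (\<Prod>t\<in>{1..n}. fYX s2 (y t) (x t))
       \<partial>(PiM {1..n} (\<lambda>_. lborel)))"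

definition decset :: "nat \<Rightarrow> (nat \<Rightarrow> nat \<Rightarrow> complex set) \<Rightarrow> nat \<Rightarrow> (nat \<Rightarrow> complex) set" where
  "decset n D i = PiE {1..n} (D i)"

definition gamma_i :: "real \<Rightarrow> nat \<Rightarrow> (nat \<Rightarrow> nat \<Rightarrow> complex) \<Rightarrow> (nat \<Rightarrow> nat \<Rightarrow> complex set) \<Rightarrow> nat \<Rightarrow> real" where
  "gamma_i s2 n u D i = 1 - vprob s2 n (u i) (decset n D i)"

definition gamma_avg :: "real \<Rightarrow> nat \<Rightarrow> nat \<Rightarrow> (nat \<Rightarrow> nat \<Rightarrow> complex) \<Rightarrow> (nat \<Rightarrow> nat \<Rightarrow> complex set) \<Rightarrow> real" where
  "gamma_avg s2 n M u D = (\<Sum>i\<in>{1..M}. gamma_i s2 n u D i) / real M"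

definition gbar :: "(complex \<Rightarrow> ennreal) \<Rightarrow> nat \<Rightarrow> (nat \<Rightarrow> complex) \<Rightarrow> ereal" where
  "gbar g n z = (\<Sum>t\<in>{1..n}. enn2ereal (g (z t))) / ereal (real n)"

definition theta_i :: "real \<Rightarrow> (complex \<Rightarrow> ennreal) \<Rightarrow> real \<Rightarrow> nat \<Rightarrow> (nat \<Rightarrow> nat \<Rightarrow> complex) \<Rightarrow> nat \<Rightarrow> real" where
  "theta_i s2 g B n u i =
     vprob s2 n (u i) {z \<in> PiE {1..n} (\<lambda>_. UNIV). gbar g n z < ereal B}"

definition theta_avg :: "real \<Rightarrow> (complex \<Rightarrow> ennreal) \<Rightarrow> real \<Rightarrow> nat \<Rightarrow> nat \<Rightarrow> (nat \<Rightarrow> nat \<Rightarrow> complex) \<Rightarrow> real" where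
  "theta_avg s2 g B n M u = (\<Sum>i\<in>{1..M}. theta_i s2 g B n u i) / real M"

definition is_code :: "nat \<Rightarrow> nat \<Rightarrow> nat \<Rightarrow> (nat \<Rightarrow> complex) \<Rightarrow> real
    \<Rightarrow> (nat \<Rightarrow> nat \<Rightarrow> complex) \<Rightarrow> (nat \<Rightarrow> nat \<Rightarrow> complex set) \<Rightarrow> bool" where
  "is_code n M L xs Pw u D \<longleftrightarrow>
     (\<forall>i\<in>{1..M}. \<forall>t\<in>{1..n}. u i t \<in> xs ` {1..L} \<and> cmod (u i t) \<le> Pw \<and> D i t \<in> sets lborel) \<and>
     (\<forall>i\<in>{1..M}. \<forall>j\<in>{1..M}. i \<noteq> j \<longrightarrow> decset n D i \<inter> decset n D j = {}) \<and>
     real M \<le> 2 powr (real n * real_of_int \<lfloor>log 2 (real L)\<rfloor>)"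

definition is_code_eps_B_delta :: "real \<Rightarrow> (complex \<Rightarrow> ennreal) \<Rightarrow> nat \<Rightarrow> nat \<Rightarrow> nat \<Rightarrow> (nat \<Rightarrow> complex)
    \<Rightarrow> real \<Rightarrow> real \<Rightarrow> real \<Rightarrow> real
    \<Rightarrow> (nat \<Rightarrow> nat \<Rightarrow> complex) \<Rightarrow> (nat \<Rightarrow> nat \<Rightarrow> complex set) \<Rightarrow> bool" where
  "is_code_eps_B_delta s2 g n M L xs Pw \<epsilon> B \<delta> u D \<longleftrightarrow>
     is_code n M L xs Pw u D \<and> gamma_avg s2 n M u D < \<epsilon> \<and> theta_avg s2 g B n M u < \<delta>"

definition ptype :: "nat \<Rightarrow> (nat \<Rightarrow> complex) \<Rightarrow> complex \<Rightarrow> real" where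
  "ptype n w x = real (card {t\<in>{1..n}. w t = x}) / real n"

definition code_type :: "nat \<Rightarrow> nat \<Rightarrow> (nat \<Rightarrow> nat \<Rightarrow> complex) \<Rightarrow> complex \<Rightarrow> real" where
  "code_type n M u x = (\<Sum>i\<in>{1..M}. ptype n (u i) x) / real M"

definition homogeneous :: "real \<Rightarrow> nat \<Rightarrow> nat \<Rightarrow> nat \<Rightarrow> (nat \<Rightarrow> complex)
    \<Rightarrow> (nat \<Rightarrow> nat \<Rightarrow> complex) \<Rightarrow> (nat \<Rightarrow> nat \<Rightarrow> complex set) \<Rightarrow> bool" where
  "homogeneous s2 n M L xs u D \<longleftrightarrow>
     (\<forall>i\<in>{1..M}. \<forall>l\<in>{1..L}. ptype n (u i) (xs l) = code_type n M u (xs l)) \<and>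
     (\<exists>E :: nat \<Rightarrow> complex set.
        (\<forall>l\<in>{1..L}. \<exists>i0\<in>{1..M}. \<exists>t0\<in>{1..n}. E l = D i0 t0 \<and>
           (\<forall>i\<in>{1..M}. \<forall>t\<in>{1..n}. sprob s2 (D i0 t0) (xs l) \<le> sprob s2 (D i t) (xs l))) \<and>
        (\<forall>i\<in>{1..M}. \<forall>t\<in>{1..n}. \<forall>l\<in>{1..L}. u i t = xs l \<longrightarrow> D i t = E l))"

definition entropy2 :: "nat \<Rightarrow> (nat \<Rightarrow> real) \<Rightarrow> real" where
  "entropy2 L P = - (\<Sum>l\<in>{1..L}. P l * log 2 (P l))"

end

theory Submission
  imports Defs "HOL-Real_Asymp.Real_Asymp" "HOL-Combinatorics.Multiset_Permutations"
begin


lemma deriv_alg1: fixes y a :: real assumes a: "a = 1 - y^2" "a > 0"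
  shows "2 + (2*(3*y^2)*(3*a) - 2*y^3*(3*(-(2*y))))/(3*a)^2 - 2/a = 4*y^4/(3*a^2)"
proof -
  have "a \<noteq> 0" using a by auto
  then have "2 + (2*(3*y^2)*(3*a) - 2*y^3*(3*(-(2*y))))/(3*a)^2 - 2/a = (18*a^2 + 18*y^2*a + 12*y^4 - 18*a)/(9*a^2)"
    by (simp add: field_simps eval_nat_numeral)
  also have "18*a^2 + 18*y^2*a + 12*y^4 - 18*a = 12*y^4" unfolding a(1) by (simp add: algebra_simps eval_nat_numeral)
  finally show ?thesis by simp
qed

lemma deriv_alg2: fixes y a b :: real assumes a: "a = 1 - y^2" "a > 0" and b: "b = 3 - y^2" "b > 0"
  shows "2/a - (2 + (2*(3*y^2)*b - 2*y^3*(-(2*y)))/b^2) = 8*y^4/(a*b^2)"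
proof -
  have "a \<noteq> 0" "b \<noteq> 0" using a b by auto
  then have "2/a - (2 + (2*(3*y^2)*b - 2*y^3*(-(2*y)))/b^2) = (2*b^2 - 2*a*b^2 - a*(6*y^2*b + 4*y^4))/(a*b^2)"
    by (simp add: field_simps eval_nat_numeral)
  also have "(2*b^2 - 2*a*b^2 - a*(6*y^2*b + 4*y^4)) = 8*y^4" unfolding a(1) b(1) by (simp add: algebra_simps eval_nat_numeral)
  finally show ?thesis by simp
qed

lemma ln_upper_aux:
  fixes x :: real assumes "0 \<le> x" "x < 1"
  shows "ln (1 + x) - ln (1 - x) \<le> 2*x + 2*x^3/(3*(1-x^2))"
proof -
  let ?f = "\<lambda>x::real. 2*x + 2*x^3/(3*(1-x^2)) - (ln (1 + x) - ln (1 - x))"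
  have "?f 0 \<le> ?f x"
  proof (rule DERIV_nonneg_imp_nondecreasing[OF assms(1)])
    fix y :: real assume y: "0 \<le> y" "y \<le> x"
    then have y1: "y < 1" using assms by linarith
    have pos: "1 - y^2 > 0" using y y1 by (simp add: power_less_one_iff)
    have nz: "1 - y^2 \<noteq> 0" "3*(1-y^2) \<noteq> 0" using pos by auto
    have "DERIV ?f y :> 2 + (2*(3*y^2)*(3*(1-y^2)) - 2*y^3*(3*(-(2*y))))/(3*(1-y^2))^2 - (1/(1+y) - (-1)/(1-y))"
      using y y1 nz
      by (auto intro!: derivative_eq_intros simp: power2_eq_square)
    moreover have "2 + (2*(3*y^2)*(3*(1-y^2)) - 2*y^3*(3*(-(2*y))))/(3*(1-y^2))^2 - (1/(1+y) - (-1)/(1-y)) \<ge> 0"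
    proof -
      have e: "1/(1+y) - (-1)/(1-y) = 2/(1-y^2)" using y y1
        by (simp add: field_simps power2_eq_square)
      show ?thesis unfolding e deriv_alg1[OF refl pos] by simp
    qed
    ultimately show "\<exists>d. DERIV ?f y :> d \<and> 0 \<le> d" by blast
  qed
  then show ?thesis by simp
qed

lemma ln_lower_aux:
  fixes x :: real assumes "0 \<le> x" "x < 1"
  shows "ln (1 + x) - ln (1 - x) \<ge> 2*x + 2*x^3/(3-x^2)"
proof -
  let ?f = "\<lambda>x::real. (ln (1 + x) - ln (1 - x)) - (2*x + 2*x^3/(3-x^2))"
  have "?f 0 \<le> ?f x"
  proof (rule DERIV_nonneg_imp_nondecreasing[OF assms(1)])
    fix y :: real assume y: "0 \<le> y" "y \<le> x"
    then have y1: "y < 1" using assms by linarith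
    have pos: "1 - y^2 > 0" using y y1 by (simp add: power_less_one_iff)
    have pos3: "3 - y^2 > 0" using pos by linarith
    have nz: "3 - y^2 \<noteq> 0" "1 - y^2 \<noteq> 0" using pos by auto
    have "DERIV ?f y :> (1/(1+y) - (-1)/(1-y)) - (2 + (2*(3*y^2)*(3-y^2) - 2*y^3*(-(2*y)))/(3-y^2)^2)"
      using y y1 nz
      by (auto intro!: derivative_eq_intros simp: power2_eq_square)
    moreover have "(1/(1+y) - (-1)/(1-y)) - (2 + (2*(3*y^2)*(3-y^2) - 2*y^3*(-(2*y)))/(3-y^2)^2) \<ge> 0"
    proof -
      have e: "1/(1+y) - (-1)/(1-y) = 2/(1-y^2)" using y y1
        by (simp add: field_simps power2_eq_square)
      show ?thesis unfolding e deriv_alg2[OF refl pos refl pos3] using pos by simp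
    qed
    ultimately show "\<exists>d. DERIV ?f y :> d \<and> 0 \<le> d" by blast
  qed
  then show ?thesis by simp
qed

lemma ln_ratio_x: "(m::nat) \<ge> 1 \<Longrightarrow> x = 1/(2*real m+1) \<Longrightarrow> ln (1+x) - ln (1-x) = ln (real m + 1) - ln (real m)"
proof -
  assume m: "m \<ge> 1" and x: "x = 1/(2*real m+1)"
  have e: "1 + x = (2*real m + 2)/(2*real m+1)" "1 - x = (2*real m)/(2*real m+1)"
    using m unfolding x by (simp_all add: field_simps)
  have c: "(2*real m+1) \<noteq> 0" "real m \<noteq> 0" using m by auto
  have aux: "\<And>a b c::real. c \<noteq> 0 \<Longrightarrow> (a/c)/(b/c) = a/b" by simp
  have "(1+x)/(1-x) = (2*real m + 2)/(2*real m)" unfolding e using aux[OF c(1)] by blast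
  also have "\<dots> = (real m + 1)/real m" using c by (simp add: field_simps)
  finally have "(1+x)/(1-x) = (real m + 1)/real m" .
  moreover have "1+x > 0" "1-x > 0" unfolding e using m by auto
  ultimately have "ln (1+x) - ln (1-x) = ln ((real m + 1)/real m)" using ln_div[of "1+x" "1-x"] by simp
  also have "\<dots> = ln (real m + 1) - ln (real m)" using m by (simp add: ln_div)
  finally show ?thesis .
qed



definition dd :: "nat \<Rightarrow> real" where
  "dd m = ln (fact m) - (real m + 1/2) * ln (real m) + real m"

lemma ln_fact_Suc: "ln (fact (Suc m) :: real) = ln (real m + 1) + ln (fact m)"
proof -
  have "(fact (Suc m) :: real) = (real m + 1) * fact m" by simp
  moreover have "(fact m :: real) > 0" by simp
  ultimately show ?thesis by (simp add: ln_mult)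
qed

lemma dd_step: "m \<ge> 1 \<Longrightarrow> dd m - dd (Suc m) = (real m + 1/2) * (ln (real m + 1) - ln (real m)) - 1"
  unfolding dd_def ln_fact_Suc by (simp add: algebra_simps)

lemma dd_step_bounds:
  assumes m: "m \<ge> 1"
  shows "dd m - dd (Suc m) \<le> 1/(12*real m) - 1/(12*(real m + 1))"
    and "dd m - dd (Suc m) \<ge> 1/(12*real m + 1) - 1/(12*(real m + 1) + 1)"
proof -
  define x :: real where "x = 1/(2*real m+1)"
  have x0: "0 \<le> x" "x < 1" using m by (auto simp: x_def)
  have xp: "x > 0" using m by (simp add: x_def)
  have hx: "real m + 1/2 = 1/(2*x)" using m by (simp add: x_def field_simps)
  have L: "dd m - dd (Suc m) = (ln (1+x) - ln (1-x)) / (2*x) - 1"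
    using dd_step[OF m] ln_ratio_x[OF m x_def] hx by simp
  show "dd m - dd (Suc m) \<le> 1/(12*real m) - 1/(12*(real m + 1))"
  proof -
    have "(ln (1+x) - ln (1-x)) / (2*x) \<le> (2*x + 2*x^3/(3*(1-x^2))) / (2*x)"
      using ln_upper_aux[OF x0] xp by (simp add: divide_right_mono)
    also have "\<dots> - 1 = 1/(12*real m) - 1/(12*(real m + 1))"
    proof -
      have p: "1 - x^2 > 0" using x0 by (simp add: power_less_one_iff)
      have "(2*x + 2*x^3/(3*(1-x^2))) / (2*x) - 1 = x^2/(3*(1-x^2))"
        using xp p by (simp add: field_simps eval_nat_numeral)
      also have "x^2/(3*(1-x^2)) = 1/(3*((2*real m+1)^2 - 1))"
        unfolding x_def using m by (simp add: field_simps)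
      also have "\<dots> = 1/(12*real m) - 1/(12*(real m + 1))"
        using m by (simp add: field_simps eval_nat_numeral)
      finally show ?thesis .
    qed
    finally show ?thesis using L by linarith
  qed
  show "dd m - dd (Suc m) \<ge> 1/(12*real m + 1) - 1/(12*(real m + 1) + 1)"
  proof -
    have "(ln (1+x) - ln (1-x)) / (2*x) \<ge> (2*x + 2*x^3/(3-x^2)) / (2*x)"
      using ln_lower_aux[OF x0] xp by (simp add: divide_right_mono)
    moreover have "(2*x + 2*x^3/(3-x^2)) / (2*x) - 1 = 1/(12*real m^2 + 12*real m + 2)"
    proof -
      have "x^2 < 1" using x0 by (simp add: power_less_one_iff)
      then have p: "3 - x^2 > 0" by linarith
      have "(2*x + 2*x^3/(3-x^2)) / (2*x) - 1 = x^2/(3-x^2)"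
        using xp p by (simp add: field_simps eval_nat_numeral)
      also have "x^2/(3-x^2) = 1/(3*(2*real m+1)^2 - 1)"
        unfolding x_def using m by (simp add: field_simps)
      also have "\<dots> = 1/(12*real m^2 + 12*real m + 2)"
        using m by (simp add: field_simps eval_nat_numeral)
      finally show ?thesis .
    qed
    moreover have "1/(12*real m^2 + 12*real m + 2) \<ge> 1/(12*real m + 1) - 1/(12*(real m + 1) + 1)"
    proof -
      have "1/(12*real m + 1) - 1/(12*(real m + 1) + 1) = 12/((12*real m + 1)*(12*real m+13))"
        using m by (simp add: field_simps)
      also have "\<dots> \<le> 12/(12*(12*real m^2 + 12*real m + 2))"
        apply (rule divide_left_mono)
          apply (use m in \<open>simp add: algebra_simps eval_nat_numeral\<close>)
         apply simp
        apply (rule mult_pos_pos)+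
          apply (use m in \<open>auto intro!: add_pos_nonneg\<close>)
        done
      also have "\<dots> = 1/(12*real m^2 + 12*real m + 2)"
      proof -
        have g: "\<And>B::real. 12/(12*B) = 1/B" by simp
        show ?thesis by (rule g)
      qed
      finally show ?thesis .
    qed
    ultimately show ?thesis using L by linarith
  qed
qed



lemma wallis_aux: fixes F G a w :: real assumes "G > 0" "a \<ge> 0"
  shows "F^4*w/(G^2*(2*a+1)) * (4*(a+1)^2/((2*a+1)*(2*a+3))) = ((a+1)*F)^4*(16*w)/(((2*a+2)*(2*a+1)*G)^2*(2*a+3))"
proof -
  have "((a+1)*F)^4*(16*w)/(((2*a+2)*(2*a+1)*G)^2*(2*a+3)) = (((a+1)^2*4) * ((a+1)^2 * (F^4*(4*w))))/(((a+1)^2*4) * ((2*a+1)^2*G^2*(2*a+3)))"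
    by (simp add: power_mult_distrib eval_nat_numeral algebra_simps)
  also have "\<dots> = (a+1)^2 * (F^4*(4*w))/((2*a+1)^2*G^2*(2*a+3))"
    by (rule mult_divide_mult_cancel_left) (use assms in simp)
  also have "\<dots> = F^4*w/(G^2*(2*a+1)) * (4*(a+1)^2/((2*a+1)*(2*a+3)))"
    using assms by (simp add: power2_eq_square algebra_simps)
  finally show ?thesis by simp
qed

lemma wallis_prod_eq:
  "(\<Prod>k=1..n. (4*real k^2) / (4*real k^2 - 1)) = (fact n)^4 * 16^n / ((fact (2*n))^2 * (2*real n+1))"
proof (induction n)
  case 0
  then show ?case by simp
next
  case (Suc n)
  have f2: "(fact (2 * Suc n) :: real) = (2*real n+2)*(2*real n+1)*fact (2*n)"
    by (simp add: algebra_simps)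
  have f1: "(fact (Suc n) :: real) = (real n+1)*fact n" by simp
  have p: "(fact n :: real) > 0" "(fact (2*n) :: real) > 0" by auto
  have "(\<Prod>k=1..Suc n. (4*real k^2) / (4*real k^2 - 1)) =
        (\<Prod>k=1..n. (4*real k^2) / (4*real k^2 - 1)) * ((4*real (Suc n)^2) / (4*real (Suc n)^2 - 1))"
    by simp
  also have "\<dots> = (fact n)^4 * 16^n / ((fact (2*n))^2 * (2*real n+1)) * ((4*(real n+1)^2) / ((2*real n+1)*(2*real n+3)))"
  proof -
    have "4*real (Suc n)^2 - 1 = (2*real n+1)*(2*real n+3)" "real (Suc n) = real n + 1"
      by (simp_all add: algebra_simps power2_eq_square)
    then show ?thesis unfolding Suc.IH by simp
  qed
  also have "\<dots> = (fact (Suc n))^4 * 16^(Suc n) / ((fact (2*Suc n))^2 * (2*real (Suc n)+1))"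
    unfolding f1 f2 using wallis_aux[OF p(2), of "real n" "fact n" "16^n"] by simp
  finally show ?case .
qed

lemma ln_dd_wallis:
  assumes n: "n \<ge> 1"
  shows "2*(2*dd n - dd (2*n)) = ln (2 * (\<Prod>k=1..n. (4*real k^2) / (4*real k^2 - 1)) * (2*real n+1) / real n)"
proof -
  have p: "(fact n :: real) > 0" "(fact (2*n) :: real) > 0" "real n > 0" using n by auto
  have "2 * (\<Prod>k=1..n. (4*real k^2) / (4*real k^2 - 1)) * (2*real n+1) / real n
      = 2 * (fact n)^4 * 16^n / ((fact (2*n))^2 * real n)"
  proof -
    have g: "\<And>X Y G c a :: real. c \<noteq> 0 \<Longrightarrow> 2*(X*Y/(G*c))*c/a = 2*X*Y/(G*a)" by simp
    show ?thesis unfolding wallis_prod_eq by (rule g) simp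
  qed
  also have "ln \<dots> = ln 2 + 4 * ln (fact n) + real n * (4 * ln 2) - 2 * ln (fact (2*n)) - ln (real n)"
  proof -
    have l16: "ln (16::real) = 4 * ln 2"
      using ln_realpow[of 2 4] by simp
    show ?thesis using p
      by (simp add: ln_div ln_mult ln_realpow l16)
  qed
  finally have R: "ln (2 * (\<Prod>k=1..n. (4*real k^2) / (4*real k^2 - 1)) * (2*real n+1) / real n)
     = ln 2 + 4 * ln (fact n) + real n * (4 * ln 2) - 2 * ln (fact (2*n)) - ln (real n)" .
  have l2n: "ln (real (2*n)) = ln 2 + ln (real n)" using p by (simp add: ln_mult)
  show ?thesis unfolding R dd_def l2n by (simp add: algebra_simps)
qed

definition CC :: real where "CC = ln (2*pi) / 2"

lemma dd_limits:
  shows "\<And>m. m \<ge> 1 \<Longrightarrow> dd m - 1/(12*real m) \<le> CC"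
    and "\<And>m. m \<ge> 1 \<Longrightarrow> dd m - 1/(12*real m + 1) \<ge> CC"
proof -
  define A where "A j = dd (Suc j) - 1/(12*real (Suc j))" for j
  define B where "B j = dd (Suc j) - 1/(12*real (Suc j) + 1)" for j
  have incA: "incseq A"
  proof (rule incseq_SucI)
    fix j
    have "dd (Suc j) - dd (Suc (Suc j)) \<le> 1/(12*real (Suc j)) - 1/(12*(real (Suc j) + 1))"
      by (rule dd_step_bounds(1)) simp
    then show "A j \<le> A (Suc j)" unfolding A_def by (simp add: algebra_simps)
  qed
  have decB: "decseq B"
  proof (rule decseq_SucI)
    fix j
    have "dd (Suc j) - dd (Suc (Suc j)) \<ge> 1/(12*real (Suc j) + 1) - 1/(12*(real (Suc j) + 1) + 1)"
      by (rule dd_step_bounds(2)) simp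
    then show "B (Suc j) \<le> B j" unfolding B_def by (simp add: algebra_simps)
  qed
  have AB: "A j \<le> B j" for j
    unfolding A_def B_def by (simp add: frac_le)
  have "\<forall>i. A 0 \<le> B i" using AB incA by (meson incseq_def order_trans zero_le)
  then obtain C where BC: "B \<longlonglongrightarrow> C" "\<forall>i. C \<le> B i"
    using decseq_convergent[OF decB] by blast
  have t1: "(\<lambda>j. 1/(12*real (Suc j) + 1)) \<longlonglongrightarrow> 0" by real_asymp
  have t2: "(\<lambda>j. 1/(12*real (Suc j))) \<longlonglongrightarrow> 0" by real_asymp
  have ddS: "(\<lambda>j. dd (Suc j)) \<longlonglongrightarrow> C"
  proof -
    have "(\<lambda>j. B j + 1/(12*real (Suc j) + 1)) \<longlonglongrightarrow> C + 0"
      by (intro tendsto_add BC t1)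
    then show ?thesis unfolding B_def by simp
  qed
  have AC: "A \<longlonglongrightarrow> C"
  proof -
    have "(\<lambda>j. dd (Suc j) - 1/(12*real (Suc j))) \<longlonglongrightarrow> C - 0"
      by (intro tendsto_diff ddS t2)
    then show ?thesis unfolding A_def by simp
  qed
  have dd: "dd \<longlonglongrightarrow> C" using ddS by (rule LIMSEQ_imp_Suc)
  have sm: "strict_mono (\<lambda>j::nat. 2 * Suc j)" by (simp add: strict_mono_def)
  have dd2: "(\<lambda>j. dd (2 * Suc j)) \<longlonglongrightarrow> C"
    using LIMSEQ_subseq_LIMSEQ[OF dd sm] by (simp add: o_def)
  have lim1: "(\<lambda>j. 2*(2*dd (Suc j) - dd (2*Suc j))) \<longlonglongrightarrow> 2*(2*C - C)"
    by (intro tendsto_intros ddS dd2)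
  have W: "(\<lambda>j. \<Prod>k=1..Suc j. (4*real k^2) / (4*real k^2 - 1)) \<longlonglongrightarrow> pi/2"
    using wallis by (rule LIMSEQ_Suc)
  have q: "(\<lambda>j. (2*real (Suc j)+1) / real (Suc j)) \<longlonglongrightarrow> 2" by real_asymp
  have "(\<lambda>j. ln (2 * (\<Prod>k=1..Suc j. (4*real k^2) / (4*real k^2 - 1)) * ((2*real (Suc j)+1) / real (Suc j))))
        \<longlonglongrightarrow> ln (2 * (pi/2) * 2)"
    by (intro tendsto_intros W q) simp
  note T = this
  have E: "ln (2 * (pi/2) * 2) = ln (2*pi)" by simp
  have F: "(\<lambda>j. 2*(2*dd (Suc j) - dd (2*Suc j))) = (\<lambda>j. ln (2 * (\<Prod>k=1..Suc j. (4*real k^2) / (4*real k^2 - 1)) * ((2*real (Suc j)+1) / real (Suc j))))"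
  proof
    fix j
    show "2*(2*dd (Suc j) - dd (2*Suc j)) = ln (2 * (\<Prod>k=1..Suc j. (4*real k^2) / (4*real k^2 - 1)) * ((2*real (Suc j)+1) / real (Suc j)))"
      using ln_dd_wallis[of "Suc j"] by (simp only: times_divide_eq_right)
  qed
  have lim2: "(\<lambda>j. 2*(2*dd (Suc j) - dd (2*Suc j))) \<longlonglongrightarrow> ln (2*pi)"
    unfolding F using T unfolding E .
  have "2*(2*C - C) = ln (2*pi)" using LIMSEQ_unique[OF lim1 lim2] .
  then have C: "C = CC" unfolding CC_def by simp
  show "dd m - 1/(12*real m) \<le> CC" if m: "m \<ge> 1" for m
  proof -
    have "A (m - 1) \<le> C" using incseq_le[OF incA AC] .
    then show ?thesis using m C unfolding A_def by (simp add: Suc_diff_1)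
  qed
  show "dd m - 1/(12*real m + 1) \<ge> CC" if m: "m \<ge> 1" for m
  proof -
    have "C \<le> B (m - 1)" using BC by blast
    then show ?thesis using m C unfolding B_def by (simp add: Suc_diff_1)
  qed
qed



lemma stirling_upper: "m \<ge> 1 \<Longrightarrow> ln (fact m) \<le> CC + 1/(12*real m) + (real m + 1/2) * ln (real m) - real m"
  using dd_limits(1)[of m] unfolding dd_def by simp

lemma stirling_lower: "m \<ge> 1 \<Longrightarrow> ln (fact m) \<ge> CC + 1/(12*real m + 1) + (real m + 1/2) * ln (real m) - real m"
  using dd_limits(2)[of m] unfolding dd_def by simp

lemma div_helper: fixes x a b c d q :: real
  assumes "x \<le> a + b + c - d" "q > 0" shows "x/q \<le> a/q + b/q + c/q - d/q"
proof -
  have "x/q \<le> (a + b + c - d)/q" using assms by (simp add: divide_right_mono)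
  then show ?thesis by (simp add: diff_divide_distrib add_divide_distrib)
qed

lemma final_ineq:
  fixes n L M :: nat and k :: "nat \<Rightarrow> nat"
  assumes n: "n \<ge> 1" and L: "L \<ge> 2" and k: "\<And>l. l \<in> {1..L} \<Longrightarrow> k l \<ge> 1"
    and ks: "(\<Sum>l\<in>{1..L}. k l) = n" and M: "M \<ge> 1"
    and lnM: "ln (real M) + (\<Sum>l\<in>{1..L}. ln (fact (k l))) \<le> ln (fact n)"
    and Pk: "\<And>l. l \<in> {1..L} \<Longrightarrow> P l = real (k l) / real n"
  shows "log 2 (real M) / real n
      \<le> entropy2 L P
        + 1 / (real n)\<^sup>2 * (1 / 12 - (\<Sum>l\<in>{1..L}. 1 / (12 * P l + 1)))
        + 1 / real n * (log 2 (sqrt (2 * pi))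
              - (\<Sum>l\<in>{1..L}. log 2 (sqrt (2 * pi * P l))))
        - log 2 (real n) / real n * ((real L - 1) / 2)"
proof -
  define K where "K l = real (k l)" for l
  define q where "q = real n * ln 2"
  have np: "real n > 0" using n by simp
  have q: "q > 0" unfolding q_def using np by simp
  have Kp: "\<And>l. l \<in> {1..L} \<Longrightarrow> K l > 0" using k unfolding K_def by (metis of_nat_0_less_iff less_le_trans zero_less_one)
  have Ks: "(\<Sum>l\<in>{1..L}. K l) = real n" unfolding K_def using ks by (metis of_nat_sum)
  have Ks': "sum K {Suc 0..L} = real n" using Ks by simp
  have Kle: "\<And>l. l \<in> {1..L} \<Longrightarrow> K l \<le> real n"
  proof -
    fix l assume l: "l \<in> {1..L}"
    have "k l \<le> (\<Sum>l\<in>{1..L}. k l)" by (rule member_le_sum) (use l in auto)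
    then show "K l \<le> real n" unfolding K_def using ks by simp
  qed
  have cL: "card {1..L} = L" by simp
  define c where "c = CC"
  have cdef: "ln (2*pi) = 2*c" unfolding c_def CC_def by simp
  have T1: "entropy2 L P = (real n * ln (real n) - (\<Sum>l\<in>{1..L}. K l * ln (K l))) / q"
  proof -
    have "entropy2 L P = - (\<Sum>l\<in>{1..L}. (K l * ln (K l) - K l * ln (real n)) / q)"
      unfolding entropy2_def
    proof (intro arg_cong[where f=uminus] sum.cong refl)
      fix l assume l: "l \<in> {1..L}"
      have PK: "P l = K l / real n" using Pk[OF l] unfolding K_def .
      show "P l * log 2 (P l) = (K l * ln (K l) - K l * ln (real n)) / q"
        unfolding PK using Kp[OF l] np unfolding q_def log_def by (simp add: ln_div field_simps)
    qed
    also have "\<dots> = (real n * ln (real n) - (\<Sum>l\<in>{1..L}. K l * ln (K l))) / q"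
      by (simp add: sum_divide_distrib[symmetric] sum_subtractf sum_distrib_right[symmetric] Ks Ks' field_simps) (simp add: diff_divide_distrib)
    finally show ?thesis .
  qed
  have T2: "1 / (real n)\<^sup>2 * (1 / 12 - (\<Sum>l\<in>{1..L}. 1 / (12 * P l + 1)))
      = ln 2 * (1/(12*real n) - (\<Sum>l\<in>{1..L}. 1/(12*K l + real n))) / q"
  proof -
    have "(\<Sum>l\<in>{1..L}. 1 / (12 * P l + 1)) = (\<Sum>l\<in>{1..L}. real n / (12*K l + real n))"
    proof (rule sum.cong[OF refl])
      fix l assume l: "l \<in> {1..L}"
      have PK: "P l = K l / real n" using Pk[OF l] unfolding K_def .
      show "1 / (12 * P l + 1) = real n / (12*K l + real n)"
        unfolding PK using np Kp[OF l] by (simp add: field_simps)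
    qed
    also have "\<dots> = real n * (\<Sum>l\<in>{1..L}. 1/(12*K l + real n))"
      by (simp add: sum_distrib_left)
    finally have e: "(\<Sum>l\<in>{1..L}. 1 / (12 * P l + 1)) = real n * (\<Sum>l\<in>{1..L}. 1/(12*K l + real n))" .
    show ?thesis unfolding e q_def using np by (simp add: field_simps power2_eq_square)
  qed
  have T3: "1 / real n * (log 2 (sqrt (2 * pi)) - (\<Sum>l\<in>{1..L}. log 2 (sqrt (2 * pi * P l))))
      = ((1 - real L) * c - (1/2) * (\<Sum>l\<in>{1..L}. ln (K l)) + (real L / 2) * ln (real n)) / q"
  proof -
    have "(\<Sum>l\<in>{1..L}. log 2 (sqrt (2 * pi * P l)))
        = (\<Sum>l\<in>{1..L}. (c + (1/2) * ln (K l) - (1/2) * ln (real n)) / ln 2)"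
    proof (rule sum.cong[OF refl])
      fix l assume l: "l \<in> {1..L}"
      have "ln (sqrt (2 * pi * (K l / real n))) = (ln (2*pi) + ln (K l) - ln (real n)) / 2"
        using Kp[OF l] np by (simp add: ln_sqrt ln_mult ln_div)
      moreover have PK: "P l = K l / real n" using Pk[OF l] unfolding K_def .
      ultimately show "log 2 (sqrt (2 * pi * P l)) = (c + (1/2) * ln (K l) - (1/2) * ln (real n)) / ln 2"
        unfolding log_def cdef by simp
    qed
    also have "\<dots> = (real L * c + (1/2) * (\<Sum>l\<in>{1..L}. ln (K l)) - real L * (1/2) * ln (real n)) / ln 2"
      by (simp add: sum_divide_distrib[symmetric] sum_subtractf sum.distrib sum_distrib_left[symmetric])
    finally have e: "(\<Sum>l\<in>{1..L}. log 2 (sqrt (2 * pi * P l))) = (real L * c + (1/2) * (\<Sum>l\<in>{1..L}. ln (K l)) - real L * (1/2) * ln (real n)) / ln 2" .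
    have e2: "log 2 (sqrt (2 * pi)) = c / ln 2" unfolding log_def using cdef by (simp add: ln_sqrt)
    show ?thesis unfolding e e2 q_def using np by (simp add: field_simps)
  qed
  have T4: "log 2 (real n) / real n * ((real L - 1) / 2) = ((real L - 1)/2 * ln (real n)) / q"
    unfolding q_def log_def using np by (simp add: field_simps)
  have T0: "log 2 (real M) / real n = ln (real M) / q"
    unfolding q_def log_def using np by (simp add: field_simps)
  have su: "ln (fact n) \<le> c + 1/(12*real n) + (real n + 1/2) * ln (real n) - real n"
    using stirling_upper[OF n] unfolding c_def .
  have sl: "(\<Sum>l\<in>{1..L}. ln (fact (k l))) \<ge> (\<Sum>l\<in>{1..L}. c + 1/(12*K l + 1) + (K l + 1/2) * ln (K l) - K l)"
    by (rule sum_mono) (use stirling_lower k in \<open>auto simp: K_def c_def\<close>)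
  have slsum: "(\<Sum>l\<in>{1..L}. c + 1/(12*K l + 1) + (K l + 1/2) * ln (K l) - K l)
     = real L * c + (\<Sum>l\<in>{1..L}. 1/(12*K l + 1)) + (\<Sum>l\<in>{1..L}. K l * ln (K l)) + (1/2) * (\<Sum>l\<in>{1..L}. ln (K l)) - real n"
    by (simp add: sum.distrib sum_subtractf sum_distrib_left[symmetric] Ks Ks' algebra_simps)
       (simp add: sum_divide_distrib[symmetric])
  have l2: "ln (2::real) < 1" "ln (2::real) > 0" using ln_2_less_1 by auto
  have err: "1/(12*real n) - (\<Sum>l\<in>{1..L}. 1/(12*K l + 1)) \<le> ln 2 * (1/(12*real n) - (\<Sum>l\<in>{1..L}. 1/(12*K l + real n)))"
  proof -
    have a: "\<And>l. l \<in> {1..L} \<Longrightarrow> 1/(12*K l + 1) - ln 2/(12*K l + real n) \<ge> (1 - ln 2) * (1/(13 * real n))"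
    proof -
      fix l assume l: "l \<in> {1..L}"
      have p: "12*K l + 1 > 0" "12*K l + real n > 0" using Kp[OF l] np by auto
      have "1/(12*K l + 1) \<ge> 1/(12*K l + real n)" using p n by (simp add: frac_le)
      moreover have "ln 2/(12*K l + real n) + (1 - ln 2) * (1/(12*K l + real n)) = 1/(12*K l + real n)"
        using p by (simp add: field_simps)
      ultimately have "1/(12*K l + 1) - ln 2/(12*K l + real n) \<ge> (1 - ln 2) * (1/(12*K l + real n))"
        by linarith
      moreover have "1/(12*K l + real n) \<ge> 1/(13 * real n)" using p Kle[OF l] by (simp add: frac_le)
      ultimately show "1/(12*K l + 1) - ln 2/(12*K l + real n) \<ge> (1 - ln 2) * (1/(13 * real n))"
        using l2 by (smt (verit) mult_left_mono)
    qed
    have "(\<Sum>l\<in>{1..L}. 1/(12*K l + 1) - ln 2/(12*K l + real n)) \<ge> (\<Sum>l\<in>{1..L}. (1 - ln 2) * (1/(13 * real n)))"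
      by (rule sum_mono) (rule a)
    also have "(\<Sum>l\<in>{1..L}. (1 - ln 2) * (1/(13 * real n))) = real L * ((1 - ln 2) * (1/(13 * real n)))" by simp
    finally have b: "(\<Sum>l\<in>{1..L}. 1/(12*K l + 1)) - ln 2 * (\<Sum>l\<in>{1..L}. 1/(12*K l + real n)) \<ge> real L * ((1 - ln 2) * (1/(13 * real n)))"
      by (simp add: sum_subtractf sum_distrib_left)
    have "real L * ((1 - ln 2) * (1/(13 * real n))) \<ge> 2 * ((1 - ln 2) * (1/(13 * real n)))"
      using L l2 np by (intro mult_right_mono) auto
    moreover have "2 * ((1 - ln 2) * (1/(13 * real n))) \<ge> (1 - ln 2) * (1/(12 * real n))"
      using l2 np by (simp add: field_simps)
    moreover have "(1 - ln 2) * (1/(12*real n)) = 1/(12*real n) - ln 2 * (1/(12*real n))"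
      by (simp only: left_diff_distrib mult_1_left)
    moreover have "ln 2 * (1/(12*real n) - (\<Sum>l\<in>{1..L}. 1/(12*K l + real n)))
       = ln 2 * (1/(12*real n)) - ln 2 * (\<Sum>l\<in>{1..L}. 1/(12*K l + real n))"
      by (simp add: right_diff_distrib)
    ultimately show ?thesis using b by linarith
  qed
  have main: "ln (real M) \<le> real n * ln (real n) - (\<Sum>l\<in>{1..L}. K l * ln (K l))
      + ln 2 * (1/(12*real n) - (\<Sum>l\<in>{1..L}. 1/(12*K l + real n)))
      + ((1 - real L) * c - (1/2) * (\<Sum>l\<in>{1..L}. ln (K l)) + (real L / 2) * ln (real n))
      - (real L - 1)/2 * ln (real n)"
  proof -
    have e2: "(1 - real L) * c = c - real L * c" by (simp add: algebra_simps)
    have e3: "(real L - 1)/2 * ln (real n) = (real L / 2) * ln (real n) - (1/2) * ln (real n)" by (simp add: field_simps)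
    have e4: "(real n + 1/2) * ln (real n) = real n * ln (real n) + (1/2) * ln (real n)" by (simp add: algebra_simps)
    show ?thesis using lnM su sl slsum err e2 e3 e4 by linarith
  qed
  show ?thesis unfolding T0 T1 T2 T3 T4
    by (rule div_helper[OF main q])
qed

lemma final_L1:
  fixes n M :: nat and P :: "nat \<Rightarrow> real"
  assumes n: "n \<ge> 1" and M: "M = 1" and P1: "P 1 = 1"
  shows "log 2 (real M) / real n
      \<le> entropy2 1 P
        + 1 / (real n)\<^sup>2 * (1 / 12 - (\<Sum>l\<in>{1..1}. 1 / (12 * P l + 1)))
        + 1 / real n * (log 2 (sqrt (2 * pi))
              - (\<Sum>l\<in>{1..1}. log 2 (sqrt (2 * pi * P l))))
        - log 2 (real n) / real n * ((real 1 - 1) / 2)"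
  using M P1 unfolding entropy2_def by simp



lemma count_mset_map_upt:
  "count (mset (map f [1..<Suc n])) x = card {t\<in>{1..n}. f t = x}"
proof -
  have "count (mset (map f [1..<Suc n])) x = (\<Sum>y\<in>f -` {x} \<inter> set_mset (mset_set {1..<Suc n}). count (mset_set {1..<Suc n}) y)"
    by (simp only: mset_map mset_upt count_image_mset)
  also have "\<dots> = (\<Sum>y\<in>f -` {x} \<inter> {1..<Suc n}. 1)"
    by (rule sum.cong) auto
  also have "\<dots> = card (f -` {x} \<inter> {1..<Suc n})" by simp
  also have "f -` {x} \<inter> {1..<Suc n} = {t\<in>{1..n}. f t = x}" by auto
  finally show ?thesis .
qed

lemma vprob_empty: "vprob s2 n x {} = 0"
  unfolding vprob_def by simp

theorem corollary4:
  fixes n M L :: nat and xs :: "nat \<Rightarrow> complex" and Pw s2 \<epsilon> B \<delta> :: real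
    and g :: "complex \<Rightarrow> ennreal"
    and u :: "nat \<Rightarrow> nat \<Rightarrow> complex" and D :: "nat \<Rightarrow> nat \<Rightarrow> complex set"
  assumes "n \<ge> 1" and "M \<ge> 1" and "L \<ge> 1"
    and "inj_on xs {1..L}"
    and "Pw > 0" and "s2 > 0"
    and "g \<in> borel_measurable borel"
    and "\<epsilon> > 0" and "\<epsilon> \<le> 1"
    and "is_code_eps_B_delta s2 g n M L xs Pw \<epsilon> B \<delta> u D"
    and "homogeneous s2 n M L xs u D"
  shows "(\<forall>l\<in>{1..L}. code_type n M u (xs l) > 0) \<longrightarrow>
    log 2 (real M) / real n
      \<le> entropy2 L (\<lambda>l. code_type n M u (xs l))
        + 1 / (real n)\<^sup>2 * (1 / 12 - (\<Sum>l\<in>{1..L}. 1 / (12 * code_type n M u (xs l) + 1)))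
        + 1 / real n * (log 2 (sqrt (2 * pi))
              - (\<Sum>l\<in>{1..L}. log 2 (sqrt (2 * pi * code_type n M u (xs l)))))
        - log 2 (real n) / real n * ((real L - 1) / 2)"
proof
  assume Ppos: "\<forall>l\<in>{1..L}. code_type n M u (xs l) > 0"
  note n = assms(1) and Mge = assms(2) and Lge = assms(3) and inj = assms(4)
  have np: "real n > 0" using n by simp
  from assms(10) have code: "is_code n M L xs Pw u D" and gam: "gamma_avg s2 n M u D < \<epsilon>"
    unfolding is_code_eps_B_delta_def by simp_all
  from code have c1: "\<forall>i\<in>{1..M}. \<forall>t\<in>{1..n}. u i t \<in> xs ` {1..L} \<and> cmod (u i t) \<le> Pw \<and> D i t \<in> sets lborel"
    and c2: "\<forall>i\<in>{1..M}. \<forall>j\<in>{1..M}. i \<noteq> j \<longrightarrow> decset n D i \<inter> decset n D j = {}"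
    unfolding is_code_def by simp_all
  have cu: "\<And>i t. i \<in> {1..M} \<Longrightarrow> t \<in> {1..n} \<Longrightarrow> u i t \<in> xs ` {1..L}"
    using c1 by blast
  have disj: "\<And>i j. i \<in> {1..M} \<Longrightarrow> j \<in> {1..M} \<Longrightarrow> i \<noteq> j \<Longrightarrow> decset n D i \<inter> decset n D j = {}"
    using c2 by blast
  have hom1: "\<forall>i\<in>{1..M}. \<forall>l\<in>{1..L}. ptype n (u i) (xs l) = code_type n M u (xs l)"
    using assms(11) unfolding homogeneous_def by (rule conjunct1)
  then have types: "\<And>i l. i \<in> {1..M} \<Longrightarrow> l \<in> {1..L} \<Longrightarrow> ptype n (u i) (xs l) = code_type n M u (xs l)"
    by blast
  have hom2: "\<exists>E :: nat \<Rightarrow> complex set.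
        (\<forall>l\<in>{1..L}. \<exists>i0\<in>{1..M}. \<exists>t0\<in>{1..n}. E l = D i0 t0 \<and>
           (\<forall>i\<in>{1..M}. \<forall>t\<in>{1..n}. sprob s2 (D i0 t0) (xs l) \<le> sprob s2 (D i t) (xs l))) \<and>
        (\<forall>i\<in>{1..M}. \<forall>t\<in>{1..n}. \<forall>l\<in>{1..L}. u i t = xs l \<longrightarrow> D i t = E l)"
    using assms(11) unfolding homogeneous_def by (rule conjunct2)
  then obtain E where E2: "\<forall>i\<in>{1..M}. \<forall>t\<in>{1..n}. \<forall>l\<in>{1..L}. u i t = xs l \<longrightarrow> D i t = E l"
    by (elim exE conjE) (rule that)
  then have DE: "\<And>i t l. i \<in> {1..M} \<Longrightarrow> t \<in> {1..n} \<Longrightarrow> l \<in> {1..L} \<Longrightarrow> u i t = xs l \<Longrightarrow> D i t = E l"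
    by blast
  define k where "k l = card {t\<in>{1..n}. u 1 t = xs l}" for l
  have one: "1 \<in> {1..M}" using Mge by simp
  have ct: "\<And>l. l \<in> {1..L} \<Longrightarrow> code_type n M u (xs l) = real (k l) / real n"
    using types[OF one] unfolding ptype_def k_def by simp
  have cnt: "\<And>i l. i \<in> {1..M} \<Longrightarrow> l \<in> {1..L} \<Longrightarrow> card {t\<in>{1..n}. u i t = xs l} = k l"
  proof -
    fix i l assume i: "i \<in> {1..M}" and l: "l \<in> {1..L}"
    have "real (card {t\<in>{1..n}. u i t = xs l}) / real n = real (k l) / real n"
      using types[OF i l] ct[OF l] unfolding ptype_def by simp
    then show "card {t\<in>{1..n}. u i t = xs l} = k l" using np by (simp add: divide_cancel_right)
  qed
  have kpos: "\<And>l. l \<in> {1..L} \<Longrightarrow> k l \<ge> 1"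
  proof -
    fix l assume l: "l \<in> {1..L}"
    have "real (k l) / real n > 0" using Ppos l ct by auto
    then show "k l \<ge> 1" using np by (simp add: zero_less_divide_iff)
  qed
  have hit: "\<And>i l. i \<in> {1..M} \<Longrightarrow> l \<in> {1..L} \<Longrightarrow> \<exists>t\<in>{1..n}. u i t = xs l"
  proof -
    fix i l assume i: "i \<in> {1..M}" and l: "l \<in> {1..L}"
    have "card {t\<in>{1..n}. u i t = xs l} \<ge> 1" using cnt[OF i l] kpos[OF l] by simp
    then have "{t\<in>{1..n}. u i t = xs l} \<noteq> {}" by (metis card.empty not_one_le_zero)
    then show "\<exists>t\<in>{1..n}. u i t = xs l" by blast
  qed
  have Ene: "\<And>l. l \<in> {1..L} \<Longrightarrow> E l \<noteq> {}"
  proof (rule ccontr)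
    fix l assume l: "l \<in> {1..L}" and "\<not> E l \<noteq> {}"
    then have El: "E l = {}" by simp
    have "\<And>i. i \<in> {1..M} \<Longrightarrow> gamma_i s2 n u D i = 1"
    proof -
      fix i assume i: "i \<in> {1..M}"
      obtain t where t: "t \<in> {1..n}" "u i t = xs l" using hit[OF i l] by blast
      have "D i t = {}" using DE[OF i t(1) l t(2)] El by simp
      then have "decset n D i = {}" unfolding decset_def using t(1) by (auto simp: PiE_eq_empty_iff)
      then show "gamma_i s2 n u D i = 1" unfolding gamma_i_def by (simp add: vprob_empty)
    qed
    then have "gamma_avg s2 n M u D = 1" unfolding gamma_avg_def using Mge by simp
    then show False using gam assms(9) by simp
  qed
  have Dne: "\<And>i t. i \<in> {1..M} \<Longrightarrow> t \<in> {1..n} \<Longrightarrow> D i t \<noteq> {}"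
  proof -
    fix i t assume i: "i \<in> {1..M}" and t: "t \<in> {1..n}"
    obtain l where l: "l \<in> {1..L}" "u i t = xs l" using cu[OF i t] by blast
    show "D i t \<noteq> {}" using DE[OF i t l] Ene[OF l(1)] by simp
  qed
  have decne: "\<And>i. i \<in> {1..M} \<Longrightarrow> decset n D i \<noteq> {}"
    unfolding decset_def using Dne by (auto simp: PiE_eq_empty_iff)
  define w where "w i = map (u i) [1..<Suc n]" for i
  have winj: "inj_on w {1..M}"
  proof (rule inj_onI)
    fix i j assume i: "i \<in> {1..M}" and j: "j \<in> {1..M}" and wij: "w i = w j"
    have uij: "\<And>t. t \<in> {1..n} \<Longrightarrow> u i t = u j t" using wij unfolding w_def by auto
    have "\<And>t. t \<in> {1..n} \<Longrightarrow> D i t = D j t"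
    proof -
      fix t assume t: "t \<in> {1..n}"
      obtain l where l: "l \<in> {1..L}" "u i t = xs l" using cu[OF i t] by blast
      show "D i t = D j t" using DE[OF i t l] DE[OF j t l(1)] uij[OF t] l(2) by simp
    qed
    then have "decset n D i = decset n D j" unfolding decset_def by (rule PiE_cong)
    then show "i = j" using disj[OF i j] decne[OF i] by auto
  qed
  define A where "A = mset (w 1)"
  have cntA: "\<And>i x. i \<in> {1..M} \<Longrightarrow> count (mset (w i)) x = card {t\<in>{1..n}. u 1 t = x}"
  proof -
    fix i x assume i: "i \<in> {1..M}"
    show "count (mset (w i)) x = card {t\<in>{1..n}. u 1 t = x}"
    proof (cases "x \<in> xs ` {1..L}")
      case True
      then obtain l where l: "l \<in> {1..L}" "x = xs l" by blast
      show ?thesis unfolding w_def count_mset_map_upt l(2) cnt[OF i l(1)] cnt[OF one l(1)] ..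
    next
      case False
      have "{t\<in>{1..n}. u i t = x} = {}" "{t\<in>{1..n}. u 1 t = x} = {}"
        using cu[OF i] cu[OF one] False by auto
      note e = this
      show ?thesis unfolding w_def count_mset_map_upt e by simp
    qed
  qed
  have msw: "\<And>i. i \<in> {1..M} \<Longrightarrow> mset (w i) = A"
    unfolding A_def by (rule multiset_eqI) (simp add: cntA one)
  have sub: "w ` {1..M} \<subseteq> permutations_of_multiset A"
    using msw by (auto intro: permutations_of_multisetI)
  have Mle: "M \<le> card (permutations_of_multiset A)"
  proof -
    have "M = card (w ` {1..M})" using card_image[OF winj] by simp
    also have "\<dots> \<le> card (permutations_of_multiset A)"
      by (rule card_mono[OF finite_permutations_of_multiset sub])
    finally show ?thesis .
  qed
  have sizeA: "size A = n" unfolding A_def w_def by simp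
  have setA: "set_mset A = xs ` {1..L}"
  proof
    show "set_mset A \<subseteq> xs ` {1..L}" unfolding A_def w_def using cu[OF one] by auto
    show "xs ` {1..L} \<subseteq> set_mset A"
    proof
      fix x assume "x \<in> xs ` {1..L}"
      then obtain l where l: "l \<in> {1..L}" "x = xs l" by blast
      obtain t where t: "t \<in> {1..n}" "u 1 t = xs l" using hit[OF one l(1)] by blast
      have "x \<in> u 1 ` set [1..<Suc n]" using t l(2) by (intro image_eqI[of _ _ t]) auto
      then show "x \<in> set_mset A" unfolding A_def w_def by (simp only: set_mset_mset set_map)
    qed
  qed
  have countA: "\<And>l. l \<in> {1..L} \<Longrightarrow> count A (xs l) = k l"
    unfolding A_def using cntA[OF one] k_def by simp
  have prodA: "(\<Prod>x\<in>set_mset A. fact (count A x) :: nat) = (\<Prod>l\<in>{1..L}. fact (k l))"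
    unfolding setA prod.reindex[OF inj] by (rule prod.cong) (simp_all add: countA)
  have ks: "(\<Sum>l\<in>{1..L}. k l) = n"
  proof -
    have "size A = (\<Sum>x\<in>set_mset A. count A x)" by (rule size_multiset_overloaded_eq)
    also have "\<dots> = (\<Sum>l\<in>{1..L}. k l)"
      unfolding setA sum.reindex[OF inj] by (rule sum.cong) (simp_all add: countA)
    finally show ?thesis using sizeA by simp
  qed
  have natineq: "M * (\<Prod>l\<in>{1..L}. fact (k l)) \<le> fact n"
  proof -
    have "M * (\<Prod>l\<in>{1..L}. fact (k l)) \<le> card (permutations_of_multiset A) * (\<Prod>x\<in>set_mset A. fact (count A x))"
      unfolding prodA using Mle by simp
    also have "\<dots> = fact n" using card_permutations_of_multiset_aux[of A] sizeA by simp
    finally show ?thesis .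
  qed
  have lnM: "ln (real M) + (\<Sum>l\<in>{1..L}. ln (fact (k l))) \<le> ln (fact n)"
  proof -
    have r: "real M * (\<Prod>l\<in>{1..L}. (fact (k l) :: real)) \<le> fact n"
    proof -
      have "real (M * (\<Prod>l\<in>{1..L}. fact (k l))) \<le> real (fact n)" using natineq by (simp only: of_nat_le_iff)
      then show ?thesis by (simp add: of_nat_prod)
    qed
    have pp: "(\<Prod>l\<in>{1..L}. (fact (k l) :: real)) > 0" by (rule prod_pos) simp
    have Mp: "real M > 0" using Mge by simp
    have "ln (real M) + (\<Sum>l\<in>{1..L}. ln (fact (k l))) = ln (real M * (\<Prod>l\<in>{1..L}. (fact (k l) :: real)))"
      using Mp pp by (simp add: ln_mult ln_prod)
    also have "\<dots> \<le> ln (fact n)" using r Mp pp by simp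
    finally show ?thesis .
  qed
  show "log 2 (real M) / real n
      \<le> entropy2 L (\<lambda>l. code_type n M u (xs l))
        + 1 / (real n)\<^sup>2 * (1 / 12 - (\<Sum>l\<in>{1..L}. 1 / (12 * code_type n M u (xs l) + 1)))
        + 1 / real n * (log 2 (sqrt (2 * pi))
              - (\<Sum>l\<in>{1..L}. log 2 (sqrt (2 * pi * code_type n M u (xs l)))))
        - log 2 (real n) / real n * ((real L - 1) / 2)"
  proof (cases "L = 1")
    case True
    have k1: "k 1 = n" using ks True by simp
    have "M * fact n \<le> fact n" using natineq True k1 by simp
    then have "M * fact n \<le> 1 * fact n" by simp
    then have "M \<le> 1" using fact_gt_zero[of n] by (simp only: mult_le_cancel2) blast
    then have M1: "M = 1" using Mge by simp
    have P1: "code_type n M u (xs 1) = 1" using ct[of 1] True k1 np by simp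
    show ?thesis using final_L1[OF n M1, of "\<lambda>l. code_type n M u (xs l)"] P1 True by simp
  next
    case False
    then have L2: "L \<ge> 2" using Lge by simp
    show ?thesis by (rule final_ineq[OF n L2 kpos ks Mge lnM ct])
  qed
qed

end
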